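(* Let $\mathsf{X}=\mathsf{Y}=\{0,1\}$, $\mu=\psi=\mathrm{Bernoulli}(1/2)$ and $\rho(x,y)=1_{\{x\ne y\}}$ (Hamming distortion). Then for every $D\in(0,1/2)$, $$I_0(\mu\|\psi,D)<C_0(\mu\|\psi,D).$$
   Context: $I_0(\mu\|\psi,D):=\min\{\max(I(X;U),I(Y;U)):\ P_X=\mu,\ P_Y=\psi,\ \mathbb{E}[\rho(X,Y)]\le D,\ X-U-Y\text{ Markov},\ |\mathsf{U}|\le|\mathsf{X}|+|\mathsf{Y}|+1\}$ (the minimum coding rate with no common randomness for the output-constrained problem). Wyner's common information of a joint law $P_{X,Y}$ is $C(X;Y):=\inf\{I(X,Y;U): X-U-Y\text{ Markov}, U \text{ finite-valued}\}$, and $C_0(\mu\|\psi,D):=\min\{C(X;Y): P_X=\mu,\ P_Y=\psi,\ \mathbb{E}[\rho(X,Y)]\le D\}$. *)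

theory Defs
  imports Complex_Main
begin

text \<open>Joint laws of (U,X,Y) with U taking values in nat (any finite alphabet
embeds in nat), X :: 'x, Y :: 'y finite types. A law is a function
p u x y = P(U=u, X=x, Y=y).\<close>

definition usupp :: "(nat \<Rightarrow> 'x::finite \<Rightarrow> 'y::finite \<Rightarrow> real) \<Rightarrow> nat set" where
  "usupp p = {u. \<exists>x y. p u x y \<noteq> 0}"

definition is_law3 :: "(nat \<Rightarrow> 'x::finite \<Rightarrow> 'y::finite \<Rightarrow> real) \<Rightarrow> bool" where
  "is_law3 p \<longleftrightarrow> (\<forall>u x y. 0 \<le> p u x y) \<and> finite (usupp p) \<and>
     (\<Sum>u\<in>usupp p. \<Sum>x\<in>UNIV. \<Sum>y\<in>UNIV. p u x y) = 1"

definition marg_X :: "(nat \<Rightarrow> 'x::finite \<Rightarrow> 'y::finite \<Rightarrow> real) \<Rightarrow> 'x \<Rightarrow> real" where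
  "marg_X p x = (\<Sum>u\<in>usupp p. \<Sum>y\<in>UNIV. p u x y)"

definition marg_Y :: "(nat \<Rightarrow> 'x::finite \<Rightarrow> 'y::finite \<Rightarrow> real) \<Rightarrow> 'y \<Rightarrow> real" where
  "marg_Y p y = (\<Sum>u\<in>usupp p. \<Sum>x\<in>UNIV. p u x y)"

definition marg_XY :: "(nat \<Rightarrow> 'x::finite \<Rightarrow> 'y::finite \<Rightarrow> real) \<Rightarrow> 'x \<Rightarrow> 'y \<Rightarrow> real" where
  "marg_XY p x y = (\<Sum>u\<in>usupp p. p u x y)"

text \<open>Markov chain X - U - Y: P(x,y|u) = P(x|u) P(y|u), multiplied out by P(u)^2.\<close>
definition markov_XUY :: "(nat \<Rightarrow> 'x::finite \<Rightarrow> 'y::finite \<Rightarrow> real) \<Rightarrow> bool" where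
  "markov_XUY p \<longleftrightarrow> (\<forall>u x y.
     p u x y * (\<Sum>x'\<in>UNIV. \<Sum>y'\<in>UNIV. p u x' y') =
     (\<Sum>y'\<in>UNIV. p u x y') * (\<Sum>x'\<in>UNIV. p u x' y))"

definition mutual_info :: "'a set \<Rightarrow> 'b set \<Rightarrow> ('a \<Rightarrow> 'b \<Rightarrow> real) \<Rightarrow> real" where
  "mutual_info A B q = (\<Sum>a\<in>A. \<Sum>b\<in>B.
     if q a b > 0 then q a b * log 2 (q a b / ((\<Sum>b'\<in>B. q a b') * (\<Sum>a'\<in>A. q a' b)))
     else 0)"

definition MI_XU :: "(nat \<Rightarrow> 'x::finite \<Rightarrow> 'y::finite \<Rightarrow> real) \<Rightarrow> real" where
  "MI_XU p = mutual_info (usupp p) (UNIV :: 'x set) (\<lambda>u x. \<Sum>y\<in>UNIV. p u x y)"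

definition MI_YU :: "(nat \<Rightarrow> 'x::finite \<Rightarrow> 'y::finite \<Rightarrow> real) \<Rightarrow> real" where
  "MI_YU p = mutual_info (usupp p) (UNIV :: 'y set) (\<lambda>u y. \<Sum>x\<in>UNIV. p u x y)"

definition MI_XYU :: "(nat \<Rightarrow> 'x::finite \<Rightarrow> 'y::finite \<Rightarrow> real) \<Rightarrow> real" where
  "MI_XYU p = mutual_info (usupp p) (UNIV :: ('x \<times> 'y) set) (\<lambda>u (x, y). p u x y)"

definition exp_dist :: "('x::finite \<Rightarrow> 'y::finite \<Rightarrow> real) \<Rightarrow> ('x \<Rightarrow> 'y \<Rightarrow> real) \<Rightarrow> real" where
  "exp_dist \<rho> P = (\<Sum>x\<in>UNIV. \<Sum>y\<in>UNIV. P x y * \<rho> x y)"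

definition coupling :: "('x::finite \<Rightarrow> real) \<Rightarrow> ('y::finite \<Rightarrow> real) \<Rightarrow> ('x \<Rightarrow> 'y \<Rightarrow> real) \<Rightarrow> bool" where
  "coupling \<mu> \<psi> P \<longleftrightarrow> (\<forall>x y. 0 \<le> P x y) \<and>
     (\<forall>x. (\<Sum>y\<in>UNIV. P x y) = \<mu> x) \<and> (\<forall>y. (\<Sum>x\<in>UNIV. P x y) = \<psi> y)"

text \<open>I_0(mu||psi,D): minimum (attained; written as Inf) of max(I(X;U),I(Y;U)).\<close>
definition I0 :: "('x::finite \<Rightarrow> real) \<Rightarrow> ('y::finite \<Rightarrow> real) \<Rightarrow> ('x \<Rightarrow> 'y \<Rightarrow> real) \<Rightarrow> real \<Rightarrow> real" where
  "I0 \<mu> \<psi> \<rho> D = Inf {max (MI_XU p) (MI_YU p) | p.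
     is_law3 p \<and> coupling \<mu> \<psi> (marg_XY p) \<and> exp_dist \<rho> (marg_XY p) \<le> D \<and>
     markov_XUY p \<and> card (usupp p) \<le> card (UNIV :: 'x set) + card (UNIV :: 'y set) + 1}"

definition wyner_CI :: "('x::finite \<Rightarrow> 'y::finite \<Rightarrow> real) \<Rightarrow> real" where
  "wyner_CI P = Inf {MI_XYU p | p. is_law3 p \<and> marg_XY p = P \<and> markov_XUY p}"

definition C0 :: "('x::finite \<Rightarrow> real) \<Rightarrow> ('y::finite \<Rightarrow> real) \<Rightarrow> ('x \<Rightarrow> 'y \<Rightarrow> real) \<Rightarrow> real \<Rightarrow> real" where
  "C0 \<mu> \<psi> \<rho> D = Inf {wyner_CI P | P. coupling \<mu> \<psi> P \<and> exp_dist \<rho> P \<le> D}"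

end

theory Submission
  imports Defs "HOL-Analysis.Analysis" "HOL-Real_Asymp.Real_Asymp"
begin


definition hn :: "real \<Rightarrow> real" where
  "hn p = - (p * ln p) - (1 - p) * ln (1 - p)"

lemma hn_sym: "hn (1 - p) = hn p"
  unfolding hn_def by simp

lemma hn_0[simp]: "hn 0 = 0" and hn_1[simp]: "hn 1 = 0"
  unfolding hn_def by simp_all

lemma hn_half: "hn (1/2) = ln 2"
  unfolding hn_def by (simp add: ln_div)

lemma hn_cont: "continuous_on {0..1} hn"
proof (rule continuous_on_IccI)
  show "(hn \<longlongrightarrow> hn 0) (at_right 0)" unfolding hn_def by real_asymp
  show "(hn \<longlongrightarrow> hn 1) (at_left 1)" unfolding hn_def by real_asymp
  fix x :: real assume "0 < x" "x < 1"
  then show "hn \<midarrow>x\<rightarrow> hn x" unfolding hn_def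
    by (intro continuous_intros tendsto_intros isCont_tendsto_compose[OF isCont_ln]) auto
qed simp

lemma hn_deriv:
  assumes "0 < p" "p < 1"
  shows "(hn has_real_derivative (ln (1 - p) - ln p)) (at p)"
proof -
  have "((\<lambda>p. - (p * ln p) - (1 - p) * ln (1 - p)) has_real_derivative
     (- (1 * ln p + p * (1/p)) - ((-1) * ln (1 - p) + (1 - p) * (- 1 / (1 - p))))) (at p)"
    using assms by (auto intro!: derivative_eq_intros)
  moreover have "(- (1 * ln p + p * (1/p)) - ((-1) * ln (1 - p) + (1 - p) * (- 1 / (1 - p)))) = ln (1 - p) - ln p"
    using assms by (simp add: field_simps)
  ultimately show ?thesis unfolding hn_def[abs_def] by simp
qed


lemma concave_closure:
  fixes f :: "real \<Rightarrow> real"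
  assumes ab: "a < b" and cont: "continuous_on {a..b} f" and cc: "concave_on {a<..<b} f"
  shows "concave_on {a..b} f"
proof (rule concave_on_linorderI)
  show "convex {a..b}" by simp
  fix t x y :: real
  assume t: "0 < t" "t < 1" and xy: "x \<in> {a..b}" "y \<in> {a..b}" "x < y"
  define z where "z = (1 - t) * x + t * y"
  have d1: "z - x = t * (y - x)" by (simp add: z_def algebra_simps)
  have d2: "y - z = (1 - t) * (y - x)" by (simp add: z_def algebra_simps)
  have p1: "t * (y - x) > 0" using t xy by simp
  have p2: "(1 - t) * (y - x) > 0" using t xy by simp
  have zx: "x < z" using d1 p1 by linarith
  have zy: "z < y" using d2 p2 by linarith
  have zin: "z \<in> {a<..<b}" using xy zx zy by auto
  define g where "g e = (1 - t) * f ((1 - e) * x + e * z) + t * f ((1 - e) * y + e * z)" for e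
  have ineq: "g e \<le> f z" if e: "0 < e" "e < 1" for e
  proof -
    have x1: "(1 - e) * x + e * z \<in> {a<..<b}"
    proof -
      have "(1 - e) * x + e * z > (1 - e) * x + e * x" using e zx by (simp add: mult_strict_left_mono)
      moreover have "(1 - e) * x + e * z < (1 - e) * z + e * z" using e zx by (simp add: mult_strict_left_mono)
      ultimately show ?thesis using xy zin by (auto simp: algebra_simps)
    qed
    have y1: "(1 - e) * y + e * z \<in> {a<..<b}"
    proof -
      have "(1 - e) * y + e * z < (1 - e) * y + e * y" using e zy by (simp add: mult_strict_left_mono)
      moreover have "(1 - e) * y + e * z > (1 - e) * z + e * z" using e zy by (simp add: mult_strict_left_mono)
      ultimately show ?thesis using xy zin by (auto simp: algebra_simps)
    qed
    have "(1 - t) * ((1 - e) * x + e * z) + t * ((1 - e) * y + e * z) = z"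
      unfolding z_def by (simp add: algebra_simps)
    then show ?thesis
      using concave_onD[OF cc, of t "(1 - e) * x + e * z" "(1 - e) * y + e * z"] t x1 y1
      unfolding g_def by simp
  qed
  have s1: "(\<lambda>e. (1 - e) * x + e * z) ` {0..1} \<subseteq> {a..b}"
  proof
    fix w assume "w \<in> (\<lambda>e. (1 - e) * x + e * z) ` {0..1}"
    then obtain e where e: "0 \<le> e" "e \<le> 1" "w = (1 - e) * x + e * z" by auto
    have "e * x \<le> e * z" using e zx by (intro mult_left_mono) auto
    hence "(1 - e) * x + e * x \<le> w" using e by simp
    moreover have "(1 - e) * x \<le> (1 - e) * z" using e zx by (intro mult_left_mono) auto
    hence "w \<le> (1 - e) * z + e * z" using e by simp
    ultimately show "w \<in> {a..b}" using xy zin by (auto simp: algebra_simps)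
  qed
  have s2: "(\<lambda>e. (1 - e) * y + e * z) ` {0..1} \<subseteq> {a..b}"
  proof
    fix w assume "w \<in> (\<lambda>e. (1 - e) * y + e * z) ` {0..1}"
    then obtain e where e: "0 \<le> e" "e \<le> 1" "w = (1 - e) * y + e * z" by auto
    have "e * z \<le> e * y" using e zy by (intro mult_left_mono) auto
    hence "w \<le> (1 - e) * y + e * y" using e by simp
    moreover have "(1 - e) * z \<le> (1 - e) * y" using e zy by (intro mult_left_mono) auto
    hence "(1 - e) * z + e * z \<le> w" using e by simp
    ultimately show "w \<in> {a..b}" using xy zin by (auto simp: algebra_simps)
  qed
  have c1: "continuous_on {0..1} (\<lambda>e. f ((1 - e) * x + e * z))"
    by (rule continuous_on_compose2[OF cont _ s1]) (intro continuous_intros)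
  have c2: "continuous_on {0..1} (\<lambda>e. f ((1 - e) * y + e * z))"
    by (rule continuous_on_compose2[OF cont _ s2]) (intro continuous_intros)
  have gc: "continuous_on {0..1} g"
    unfolding g_def by (intro continuous_intros c1 c2)
  have "(g \<longlongrightarrow> g 0) (at 0 within {0..1})"
    using gc by (simp add: continuous_on_def)
  hence lim: "(g \<longlongrightarrow> g 0) (at_right 0)"
    by (simp add: at_within_Icc_at_right)
  have "g 0 \<le> f z"
  proof (rule tendsto_le[OF _ tendsto_const lim])
    show "at_right (0::real) \<noteq> bot" by simp
    show "\<forall>\<^sub>F e in at_right 0. g e \<le> f z"
      unfolding eventually_at_right_field by (auto intro!: exI[of _ 1] ineq)
  qed
  thus "(1 - t) * f x + t * f y \<le> f ((1 - t) *\<^sub>R x + t *\<^sub>R y)"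
    unfolding g_def z_def by simp
qed



lemma hn_concave: "concave_on {0..1} hn"
proof (rule concave_closure)
  show "concave_on {0<..<1} hn" unfolding concave_on_def
  proof (rule convex_on_realI[where f' = "\<lambda>p. ln p - ln (1 - p)"])
    show "connected {0<..<(1::real)}" by simp
    fix x :: real assume "x \<in> {0<..<1}"
    then show "((\<lambda>x. - hn x) has_real_derivative ln x - ln (1 - x)) (at x)"
      using hn_deriv[of x] DERIV_minus by fastforce
  next
    fix x y :: real assume "x \<in> {0<..<1}" "y \<in> {0<..<1}" "x \<le> y"
    then show "ln x - ln (1 - x) \<le> ln y - ln (1 - y)" by (auto intro: diff_mono)
  qed
qed (auto intro: hn_cont)

lemma hn_le_ln2: assumes "0 \<le> p" "p \<le> 1" shows "hn p \<le> ln 2"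
proof -
  have "(1 - 1/2) * hn p + (1/2) * hn (1 - p) \<le> hn ((1 - 1/2) *\<^sub>R p + (1/2) *\<^sub>R (1 - p))"
    by (rule concave_onD[OF hn_concave]) (use assms in auto)
  moreover have eq: "(1 - 1/2) *\<^sub>R p + (1/2) *\<^sub>R (1 - p) = (1/2::real)" unfolding real_scaleR_def by (simp add: field_simps)
  have "hn ((1 - 1/2) *\<^sub>R p + (1/2) *\<^sub>R (1 - p)) = ln 2" by (simp only: eq hn_half)
  ultimately have "(1 - 1/2) * hn p + (1/2) * hn (1 - p) \<le> ln 2" by linarith
  thus ?thesis using hn_sym[of p] by simp
qed

lemma hn_strict_mono: assumes "0 \<le> x" "x < y" "y \<le> 1/2" shows "hn x < hn y"
proof (rule DERIV_pos_imp_increasing_open[OF assms(2)])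
  fix z assume z: "x < z" "z < y"
  hence "0 < z" "z < 1" "z < 1 - z" using assms by auto
  then show "\<exists>d. (hn has_real_derivative d) (at z) \<and> 0 < d"
    using hn_deriv[of z] by (intro exI[of _ "ln (1 - z) - ln z"]) auto
next
  show "continuous_on {x..y} hn" using hn_cont by (rule continuous_on_subset) (use assms in auto)
qed

lemma hn_nonneg: assumes "0 \<le> p" "p \<le> 1" shows "0 \<le> hn p"
proof -
  have "(1 - p) * hn 0 + p * hn 1 \<le> hn ((1 - p) *\<^sub>R 0 + p *\<^sub>R 1)"
    using concave_onD[OF hn_concave, of p 0 1] assms by auto
  thus ?thesis by simp
qed

definition ph :: "real \<Rightarrow> real" where "ph a = (1 - a) * ln (1 - a) - a * ln a"

lemma ph_cont: "continuous_on {0..1/2} ph"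
proof (rule continuous_on_IccI)
  show "(ph \<longlongrightarrow> ph 0) (at_right 0)" unfolding ph_def by real_asymp
  show "(ph \<longlongrightarrow> ph (1/2)) (at_left (1/2))" unfolding ph_def
    by (intro tendsto_intros tendsto_ln) auto
  fix x :: real assume "0 < x" "x < 1/2"
  then show "ph \<midarrow>x\<rightarrow> ph x" unfolding ph_def
    by (intro tendsto_intros tendsto_ln) auto
qed simp

lemma ph_deriv:
  assumes "0 < p" "p < 1"
  shows "((\<lambda>x. - ph x) has_real_derivative (ln p + ln (1 - p) + 2)) (at p)"
proof -
  have D1: "((\<lambda>p. - ((1 - p) * ln (1 - p) - p * ln p)) has_real_derivative
     - (((-1) * ln (1 - p) + (1 - p) * (- 1 / (1 - p))) - (1 * ln p + p * (1/p)))) (at p)"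
    using assms by (auto intro!: derivative_eq_intros)
  have E: "- (((-1) * ln (1 - p) + (1 - p) * (- 1 / (1 - p))) - (1 * ln p + p * (1/p))) = ln p + ln (1 - p) + 2"
    using assms by (simp add: field_simps)
  show ?thesis unfolding ph_def by (rule D1[unfolded E])
qed

lemma ph_concave: "concave_on {0..1/2} ph"
proof (rule concave_closure)
  show "concave_on {0<..<1/2} ph" unfolding concave_on_def
  proof (rule convex_on_realI[where f' = "\<lambda>p. ln p + ln (1 - p) + 2"])
    show "connected {0<..<(1/2::real)}" by simp
    fix x :: real assume "x \<in> {0<..<1/2}"
    then show "((\<lambda>x. - ph x) has_real_derivative ln x + ln (1 - x) + 2) (at x)"
      using ph_deriv[of x] by auto
  next
    fix x y :: real assume xy: "x \<in> {0<..<1/2}" "y \<in> {0<..<1/2}" "x \<le> y"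
    have "x * (1 - x) \<le> y * (1 - y)"
    proof -
      have "y * (1 - y) - x * (1 - x) = (y - x) * (1 - x - y)" by (simp add: algebra_simps)
      also have "\<dots> \<ge> 0" using xy by (intro mult_nonneg_nonneg) auto
      finally show ?thesis by simp
    qed
    hence "ln (x * (1 - x)) \<le> ln (y * (1 - y))" using xy by (intro ln_mono) auto
    then show "ln x + ln (1 - x) + 2 \<le> ln y + ln (1 - y) + 2" using xy by (simp add: ln_mult)
  qed
qed (auto intro: ph_cont)

lemma ph_quarter: "ph (1/4) > 0"
proof -
  have "(1/4::real) < (3/4) ^ 3" by (simp add: power3_eq_cube)
  hence "ln ((1/4::real)) < ln ((3/4) ^ 3)" by (subst ln_less_cancel_iff) auto
  hence "ln (1/4::real) < 3 * ln (3/4)" by (simp add: ln_realpow)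
  thus ?thesis unfolding ph_def by simp
qed

lemma ph_pos: assumes "0 < a" "a < 1/2" shows "ph a > 0"
proof (cases "a \<le> 1/4")
  case True
  have "(1 - 4*a) * ph 0 + (4*a) * ph (1/4) \<le> ph ((1 - 4*a) *\<^sub>R 0 + (4*a) *\<^sub>R (1/4))"
    using concave_onD[OF ph_concave, of "4*a" 0 "1/4"] assms True by auto
  moreover have "ph 0 = 0" by (simp add: ph_def)
  moreover have "(4*a) * ph (1/4) > 0" using assms ph_quarter by simp
  ultimately show ?thesis by simp
next
  case False
  have "(1 - (4*a-1)) * ph (1/4) + (4*a-1) * ph (1/2) \<le> ph ((1 - (4*a-1)) *\<^sub>R (1/4) + (4*a-1) *\<^sub>R (1/2))"
    using concave_onD[OF ph_concave, of "4*a-1" "1/4" "1/2"] assms False by auto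
  moreover have "ph (1/2) = 0" by (simp add: ph_def)
  moreover have "(1 - (4*a-1)) * ph (1/4) > 0" using assms ph_quarter by simp
  moreover have "(1 - (4*a-1)) *\<^sub>R (1/4) + (4*a-1) *\<^sub>R (1/2) = (a::real)" by (simp add: algebra_simps)
  ultimately show ?thesis by simp
qed



definition H2 :: "real \<Rightarrow> real" where "H2 x = hn ((1 - x) / 2)"
definition Gf :: "real \<Rightarrow> real" where "Gf z = ln (1 + z) - ln (1 - z)"

lemma H2_even: "H2 (- x) = H2 x"
proof -
  have eq: "(1 - - x) / 2 = 1 - (1 - x) / 2" by (simp add: field_simps)
  show ?thesis unfolding H2_def eq by (rule hn_sym)
qed

lemma H2_abs: "H2 \<bar>x\<bar> = H2 x"
  by (cases "x \<ge> 0") (auto simp: H2_even)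

lemma hnG: assumes "-1 < z" "z < 1"
  shows "ln (1 - (1 - z) / 2) - ln ((1 - z) / 2) = Gf z"
proof -
  have eq: "1 - (1 - z) / 2 = (1 + z) / 2" by (simp add: field_simps)
  show ?thesis using assms unfolding Gf_def eq by (simp add: ln_div)
qed

lemma H2_deriv:
  assumes "-1 < z" "z < 1"
  shows "(H2 has_real_derivative (- Gf z / 2)) (at z)"
proof -
  have d1: "(hn has_real_derivative Gf z) (at ((1 - z) / 2))"
    using hn_deriv[of "(1 - z)/2"] hnG[OF assms] assms by simp
  have d2: "((\<lambda>z. (1 - z) / 2) has_real_derivative (- 1/2)) (at z)"
    by (auto intro!: derivative_eq_intros)
  have "((\<lambda>z. hn ((1 - z) / 2)) has_real_derivative Gf z * (- 1/2)) (at z)"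
    by (rule DERIV_chain2[OF d1 d2])
  thus ?thesis unfolding H2_def[abs_def] by simp
qed

lemma H2_cont: "continuous_on {-1..1} H2"
  unfolding H2_def[abs_def]
  by (rule continuous_on_compose2[OF hn_cont]) (auto intro!: continuous_intros)

lemma Gf_0[simp]: "Gf 0 = 0" by (simp add: Gf_def)

lemma Gf_mono: assumes "0 \<le> x" "x \<le> y" "y < 1" shows "Gf x \<le> Gf y"
  using assms unfolding Gf_def by (auto intro!: diff_mono)

lemma Gf_nonneg: assumes "0 \<le> x" "x < 1" shows "0 \<le> Gf x"
  using Gf_mono[of 0 x] assms by simp

lemma Gf_convex: "convex_on {0..<1} Gf"
proof (rule convex_on_realI[where f' = "\<lambda>z. 2 / (1 - z^2)"])
  show "connected {0..<(1::real)}" by simp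
  fix x :: real assume x: "x \<in> {0..<1}"
  have "(Gf has_real_derivative (1 / (1 + x) - (- 1) / (1 - x))) (at x)"
    unfolding Gf_def[abs_def] using x by (auto intro!: derivative_eq_intros)
  moreover have "1 / (1 + x) - (- 1) / (1 - x) = 2 / (1 - x^2)"
    using x by (simp add: field_simps power2_eq_square)
  ultimately show "(Gf has_real_derivative 2 / (1 - x^2)) (at x)" by simp
next
  fix x y :: real assume xy: "x \<in> {0..<1}" "y \<in> {0..<1}" "x \<le> y"
  have "x^2 \<le> y^2" using xy by (intro power_mono) auto
  moreover have "y^2 < 1" using xy by (simp add: power_less_one_iff abs_less_iff)
  ultimately show "2 / (1 - x^2) \<le> 2 / (1 - y^2)"
    by (intro divide_left_mono) (auto intro!: mult_pos_pos)
qed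

lemma Gf_chord_le:
  assumes "0 \<le> z" "z \<le> s" "0 < s" "s < 1"
  shows "Gf z \<le> z / s * Gf s"
proof -
  have "Gf ((1 - z/s) *\<^sub>R 0 + (z/s) *\<^sub>R s) \<le> (1 - z/s) * Gf 0 + (z/s) * Gf s"
    by (rule convex_onD[OF Gf_convex]) (use assms in auto)
  thus ?thesis using assms by simp
qed

lemma Gf_chord_ge:
  assumes "0 < s" "s \<le> z" "z < 1"
  shows "z / s * Gf s \<le> Gf z"
proof -
  have "Gf ((1 - s/z) *\<^sub>R 0 + (s/z) *\<^sub>R z) \<le> (1 - s/z) * Gf 0 + (s/z) * Gf z"
    by (rule convex_onD[OF Gf_convex]) (use assms in auto)
  hence "Gf s \<le> s / z * Gf z" using assms by simp
  hence "z / s * Gf s \<le> z / s * (s / z * Gf z)" using assms by (intro mult_left_mono) auto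
  thus ?thesis using assms by simp
qed

lemma one_dim_max:
  assumes s: "0 < s" "s < 1" and z: "0 \<le> z" "z \<le> 1"
  shows "2 * H2 z + Gf s / (2 * s) * z^2 \<le> 2 * H2 s + Gf s / (2 * s) * s^2"
proof -
  define L where "L w = 2 * H2 w + Gf s / (2 * s) * w^2" for w
  have Lc: "continuous_on {0..1} L" unfolding L_def
    by (intro continuous_intros continuous_on_subset[OF H2_cont]) auto
  have Ld: "(L has_real_derivative (- Gf w + w / s * Gf s)) (at w)" if "0 < w" "w < 1" for w
  proof -
    have "(L has_real_derivative (2 * (- Gf w / 2) + Gf s / (2 * s) * (2 * w))) (at w)"
      unfolding L_def using that s by (auto intro!: derivative_eq_intros H2_deriv simp: power2_eq_square)
    moreover have "2 * (- Gf w / 2) + Gf s / (2 * s) * (2 * w) = - Gf w + w / s * Gf s"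
      using s by (simp add: field_simps)
    ultimately show ?thesis by (simp only:)
  qed
  have "L z \<le> L s"
  proof (cases "z \<le> s")
    case True
    show ?thesis
    proof (rule DERIV_nonneg_imp_increasing_open[OF True])
      fix w assume w: "z < w" "w < s"
      show "\<exists>y. (L has_real_derivative y) (at w) \<and> 0 \<le> y"
        using Ld[of w] Gf_chord_le[of w s] w s z by (intro exI[of _ "- Gf w + w / s * Gf s"]) auto
    next
      show "continuous_on {z..s} L" by (rule continuous_on_subset[OF Lc]) (use s z in auto)
    qed
  next
    case False
    show ?thesis
    proof (rule DERIV_nonpos_imp_decreasing_open[of s z])
      show "s \<le> z" using False by simp
      fix w assume w: "s < w" "w < z"
      have w1: "0 < w" "w < 1" using w s z by auto
      have "w / s * Gf s \<le> Gf w" using Gf_chord_ge[of s w] w s z by auto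
      then show "\<exists>y. (L has_real_derivative y) (at w) \<and> y \<le> 0"
        using Ld[OF w1] by (intro exI[of _ "- Gf w + w / s * Gf s"]) auto
    next
      show "continuous_on {s..z} L" by (rule continuous_on_subset[OF Lc]) (use s z in auto)
    qed
  qed
  thus ?thesis unfolding L_def .
qed



definition K :: "real \<Rightarrow> real" where "K u = H2 (exp (- u))"

lemma K_deriv: assumes "0 < u" shows "(K has_real_derivative (Gf (exp (-u)) * exp (-u) / 2)) (at u)"
proof -
  have e0: "0 < exp (-u)" by simp
  have e1: "exp (-u) < 1" using assms by simp
  have e: "-1 < exp (-u)" "exp (-u) < 1" using e0 e1 by linarith+
  have d2: "((\<lambda>u. exp (- u)) has_real_derivative (- exp (-u))) (at u)"
    by (auto intro!: derivative_eq_intros)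
  have "((\<lambda>u. H2 (exp (- u))) has_real_derivative (- Gf (exp (-u)) / 2) * (- exp (-u))) (at u)"
    by (rule DERIV_chain2[OF H2_deriv[OF e] d2])
  thus ?thesis unfolding K_def[abs_def] by simp
qed

lemma K_concave_open: "concave_on {0<..} K"
  unfolding concave_on_def
proof (rule convex_on_realI[where f' = "\<lambda>u. - (Gf (exp (-u)) * exp (-u) / 2)"])
  show "connected {(0::real)<..}" by simp
  fix u :: real assume "u \<in> {0<..}"
  then show "((\<lambda>x. - K x) has_real_derivative - (Gf (exp (- u)) * exp (- u) / 2)) (at u)"
    using K_deriv[of u] by (auto intro: DERIV_minus)
next
  fix u v :: real assume uv: "u \<in> {0<..}" "v \<in> {0<..}" "u \<le> v"
  have ev: "exp (-v) \<le> exp (-u)" using uv by simp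
  have "Gf (exp (-v)) \<le> Gf (exp (-u))" using uv ev by (intro Gf_mono) auto
  moreover have "0 \<le> Gf (exp (-v))" using uv by (intro Gf_nonneg) auto
  ultimately have "Gf (exp (-v)) * exp (-v) \<le> Gf (exp (-u)) * exp (-u)"
    using ev by (intro mult_mono) auto
  thus "- (Gf (exp (- u)) * exp (- u) / 2) \<le> - (Gf (exp (- v)) * exp (- v) / 2)" by simp
qed

lemma K_concave: assumes "0 < b" shows "concave_on {0..b} K"
proof (rule concave_closure[OF assms])
  show "continuous_on {0..b} K" unfolding K_def[abs_def]
  proof (rule continuous_on_compose2[OF H2_cont])
    show "(\<lambda>u. exp (- u)) ` {0..b} \<subseteq> {- 1..1}"
      using exp_gt_zero by (auto simp: less_imp_le order.strict_trans[of "-1" 0])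
  qed (auto intro!: continuous_intros)
  show "concave_on {0<..<b} K" using K_concave_open unfolding concave_on_def
    by (rule convex_on_subset) auto
qed

lemma H2_le: assumes "0 \<le> x" "x \<le> 1" shows "H2 x \<le> ln 2"
  unfolding H2_def using assms by (intro hn_le_ln2) auto

lemma H2_zero: "H2 0 = ln 2" unfolding H2_def using hn_half by simp

lemma gerber:
  assumes x: "0 \<le> x" "x \<le> 1" and y: "0 \<le> y" "y \<le> 1"
  shows "H2 x + H2 y \<le> 2 * H2 (sqrt (x * y))"
proof (cases "x = 0 \<or> y = 0")
  case True
  then show ?thesis using H2_le[OF x] H2_le[OF y] H2_zero by auto
next
  case False
  hence xp: "0 < x" and yp: "0 < y" using x y by auto
  define u where "u = - ln x"
  define v where "v = - ln y"
  have u0: "0 \<le> u" unfolding u_def using xp x by simp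
  have v0: "0 \<le> v" unfolding v_def using yp y by simp
  have "(1 - 1/2) * K u + (1/2) * K v \<le> K ((1 - 1/2) *\<^sub>R u + (1/2) *\<^sub>R v)"
    by (rule concave_onD[OF K_concave[of "u + v + 1"]]) (use u0 v0 in auto)
  moreover have "K u = H2 x" unfolding K_def u_def using xp by simp
  moreover have "K v = H2 y" unfolding K_def v_def using yp by simp
  moreover have "exp (- ((1 - 1/2) *\<^sub>R u + (1/2) *\<^sub>R v)) = sqrt (x * y)"
  proof -
    have "exp (- ((1 - 1/2) *\<^sub>R u + (1/2) *\<^sub>R v)) = exp ((1/2) * ln x) * exp ((1/2) * ln y)"
      unfolding u_def v_def by (simp add: exp_add[symmetric] algebra_simps)
    also have "\<dots> = x powr (1/2) * y powr (1/2)" using xp yp by (simp add: powr_def)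
    also have "\<dots> = sqrt x * sqrt y" using xp yp by (simp add: powr_half_sqrt)
    also have "\<dots> = sqrt (x * y)" by (simp add: real_sqrt_mult)
    finally show ?thesis .
  qed
  ultimately show ?thesis unfolding K_def by simp
qed

definition lam :: "real \<Rightarrow> real" where "lam a = (ln (1 - a) - ln a) / (1 - 2 * a)"

lemma core:
  assumes a: "0 < a" "a < 1/2" and al: "0 \<le> \<alpha>" "\<alpha> \<le> 1" and be: "0 \<le> \<beta>" "\<beta> \<le> 1"
  shows "hn \<alpha> + hn \<beta> \<le> 2 * hn a + lam a * (\<alpha> * (1 - \<beta>) + \<beta> * (1 - \<alpha>) - 2 * a * (1 - a))"
proof -
  define s where "s = 1 - 2 * a"
  define x where "x = 1 - 2 * \<alpha>"
  define y where "y = 1 - 2 * \<beta>"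
  have s: "0 < s" "s < 1" unfolding s_def using a by auto
  have X: "0 \<le> \<bar>x\<bar>" "\<bar>x\<bar> \<le> 1" unfolding x_def using al by auto
  have Y: "0 \<le> \<bar>y\<bar>" "\<bar>y\<bar> \<le> 1" unfolding y_def using be by auto
  have "H2 x = hn \<alpha>" unfolding H2_def x_def by simp
  hence ha: "hn \<alpha> = H2 \<bar>x\<bar>" using H2_abs[of x] by simp
  have "H2 y = hn \<beta>" unfolding H2_def y_def by simp
  hence hb: "hn \<beta> = H2 \<bar>y\<bar>" using H2_abs[of y] by simp
  have hs: "H2 s = hn a" unfolding H2_def s_def by simp
  define z where "z = sqrt (\<bar>x\<bar> * \<bar>y\<bar>)"
  have z: "0 \<le> z" "z \<le> 1" unfolding z_def using X Y by (auto intro: mult_le_one)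
  have z2: "z^2 = \<bar>x\<bar> * \<bar>y\<bar>" unfolding z_def using X Y by simp
  define \<mu> where "\<mu> = Gf s / (2 * s)"
  have mu0: "0 \<le> \<mu>" unfolding \<mu>_def using s Gf_nonneg[of s] by simp
  have G: "H2 \<bar>x\<bar> + H2 \<bar>y\<bar> \<le> 2 * H2 z" unfolding z_def using X Y by (intro gerber) auto
  have M: "2 * H2 z + \<mu> * z^2 \<le> 2 * H2 s + \<mu> * s^2" unfolding \<mu>_def using one_dim_max[OF s z] .
  have xy: "\<mu> * (x * y) \<le> \<mu> * (\<bar>x\<bar> * \<bar>y\<bar>)" using mu0 by (intro mult_left_mono) (auto simp: abs_mult[symmetric])
  have mu_lam: "\<mu> = lam a / 2"
  proof -
    have "Gf s = ln (1 - a) - ln a"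
    proof -
      have "ln (1 + s) = ln (2 * (1 - a))" by (rule arg_cong[where f=ln]) (simp add: s_def algebra_simps)
      also have "\<dots> = ln 2 + ln (1 - a)" using a ln_mult[of 2 "1-a"] by simp
      finally have "ln (1 + s) = ln 2 + ln (1 - a)" .
      moreover have "ln (1 - s) = ln (2 * a)" by (rule arg_cong[where f=ln]) (simp add: s_def algebra_simps)
      moreover have "ln (2 * a) = ln 2 + ln a" using a ln_mult[of 2 a] by simp
      ultimately show ?thesis unfolding Gf_def by simp
    qed
    thus ?thesis unfolding \<mu>_def lam_def s_def by simp
  qed
  have alg: "\<alpha> * (1 - \<beta>) + \<beta> * (1 - \<alpha>) - 2 * a * (1 - a) = (s^2 - x * y) / 2"
    unfolding s_def x_def y_def by (simp add: field_simps power2_eq_square)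
  have "\<mu> * z^2 = \<mu> * (\<bar>x\<bar> * \<bar>y\<bar>)" using z2 by simp
  have "hn \<alpha> + hn \<beta> \<le> 2 * H2 s + \<mu> * s^2 - \<mu> * (x * y)"
    using ha hb G M xy z2 \<open>\<mu> * z^2 = \<mu> * (\<bar>x\<bar> * \<bar>y\<bar>)\<close> by linarith
  also have "\<dots> = 2 * hn a + lam a * ((s^2 - x * y) / 2)"
    unfolding hs mu_lam by (simp add: field_simps)
  also have "\<dots> = 2 * hn a + lam a * (\<alpha> * (1 - \<beta>) + \<beta> * (1 - \<alpha>) - 2 * a * (1 - a))"
    by (simp only: alg)
  finally show ?thesis .
qed

lemma lamD_gt:
  assumes a: "0 < a" "a < 1/2"
  shows "lam a * (2 * a * (1 - a)) > hn a"
proof -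
  have eq: "(lam a * (2 * a * (1 - a)) - hn a) * (1 - 2 * a) = ph a"
    using a unfolding lam_def hn_def ph_def by (simp add: field_simps)
  have "ph a > 0" using ph_pos[OF a] .
  hence "(lam a * (2 * a * (1 - a)) - hn a) * (1 - 2 * a) > 0" using eq by simp
  moreover have "1 - 2 * a > 0" using a by simp
  ultimately show ?thesis by (simp add: zero_less_mult_iff)
qed

lemma hnD_gt:
  assumes a: "0 < a" "a < 1/2"
  shows "hn (2 * a * (1 - a)) > hn a"
proof (rule hn_strict_mono)
  show "0 \<le> a" using a by simp
  have "2 * a * (1 - a) - a = a * (1 - 2 * a)" by (simp add: algebra_simps)
  moreover have "a * (1 - 2 * a) > 0" using a by simp
  ultimately show "a < 2 * a * (1 - a)" by simp
  have "1/2 - 2 * a * (1 - a) = (1 - 2 * a)^2 / 2" by (simp add: algebra_simps power2_eq_square)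
  moreover have "(1 - 2 * a)^2 / 2 \<ge> 0" by simp
  ultimately show "2 * a * (1 - a) \<le> 1/2" by linarith
qed

lemma F_bound:
  assumes a: "0 < a" "a < 1/2" and d: "0 \<le> d" "d \<le> 2 * a * (1 - a)"
  shows "hn d + lam a * (2 * a * (1 - a) - d) \<ge> min (lam a * (2 * a * (1 - a))) (hn (2 * a * (1 - a)))"
proof -
  define D where "D = 2 * a * (1 - a)"
  have D0: "0 < D" unfolding D_def using a by simp
  have "2*a \<le> 1" "0 \<le> 1-a" "1-a \<le> 1" using a by auto
  from mult_le_one[OF this] have D1: "D \<le> 1" unfolding D_def by simp
  define t where "t = d / D"
  have t: "0 \<le> t" "t \<le> 1" unfolding t_def using d D0 unfolding D_def by auto
  have "(1 - t) * hn 0 + t * hn D \<le> hn ((1 - t) *\<^sub>R 0 + t *\<^sub>R D)"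
    by (rule concave_onD[OF hn_concave]) (use t D0 D1 in auto)
  moreover have "t * D = d" unfolding t_def using D0 by simp
  ultimately have h1: "t * hn D \<le> hn d" by simp
  have h2: "lam a * (D - d) = (1 - t) * (lam a * D)" using \<open>t * D = d\<close> by (simp add: algebra_simps)
  have "min (lam a * D) (hn D) \<le> t * hn D + (1 - t) * (lam a * D)"
  proof -
    have "t * min (lam a * D) (hn D) \<le> t * hn D" using t by (intro mult_left_mono) auto
    moreover have "(1 - t) * min (lam a * D) (hn D) \<le> (1 - t) * (lam a * D)" using t by (intro mult_left_mono) auto
    ultimately show ?thesis by (simp add: algebra_simps)
  qed
  thus ?thesis using h1 h2 unfolding D_def[symmetric] by linarith
qed



lemma sum_bool: "(\<Sum>x\<in>(UNIV::bool set). f x) = f True + f False"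
  by (simp add: UNIV_bool add.commute)

lemma UNIV_pairs: "(UNIV::(bool \<times> bool) set) = {(True,True),(True,False),(False,True),(False,False)}"
  by (auto simp: UNIV_bool[symmetric])

lemma sum_pairs: "(\<Sum>b\<in>(UNIV::(bool \<times> bool) set). f b) = f (True,True) + f (True,False) + f (False,True) + f (False,False)"
  by (simp add: UNIV_pairs add.assoc)

lemma ln_ge_one_minus: assumes "0 < (z::real)" shows "1 - 1 / z \<le> ln z"
proof -
  have "ln (1 / z) \<le> 1 / z - 1" using assms ln_le_minus_one[of "1/z"] by simp
  thus ?thesis using assms by (simp add: ln_div)
qed

lemma mi_nonneg:
  assumes A: "finite A" and B: "finite B" and nn: "\<And>a b. a \<in> A \<Longrightarrow> b \<in> B \<Longrightarrow> 0 \<le> q a b"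
    and tot: "(\<Sum>a\<in>A. \<Sum>b\<in>B. q a b) = 1"
  shows "0 \<le> mutual_info A B q"
proof -
  define r where "r a = (\<Sum>b'\<in>B. q a b')" for a
  define c where "c b = (\<Sum>a'\<in>A. q a' b)" for b
  have r0: "0 \<le> r a" if "a \<in> A" for a unfolding r_def using nn that by (intro sum_nonneg) auto
  have c0: "0 \<le> c b" if "b \<in> B" for b unfolding c_def using nn that by (intro sum_nonneg) auto
  have tm1: "(if q a b > 0 then q a b * log 2 (q a b / (r a * c b)) else 0) \<ge> (q a b - r a * c b) / ln 2"
    if ab: "a \<in> A" "b \<in> B" for a b
  proof (cases "q a b > 0")
    case True
    have rq: "q a b \<le> r a" unfolding r_def using nn ab B by (intro member_le_sum) auto
    have cq: "q a b \<le> c b" unfolding c_def using nn ab A by (intro member_le_sum) auto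
    have rp: "0 < r a" "0 < c b" using rq cq True by auto
    have z: "0 < q a b / (r a * c b)" using True rp by simp
    have "1 - 1 / (q a b / (r a * c b)) \<le> ln (q a b / (r a * c b))" by (rule ln_ge_one_minus[OF z])
    hence "q a b * (1 - 1 / (q a b / (r a * c b))) \<le> q a b * ln (q a b / (r a * c b))"
      using True by (intro mult_left_mono) auto
    moreover have "q a b * (1 - 1 / (q a b / (r a * c b))) = q a b - r a * c b"
      using True rp by (simp add: field_simps)
    ultimately have "q a b - r a * c b \<le> q a b * ln (q a b / (r a * c b))" by simp
    hence "(q a b - r a * c b) / ln 2 \<le> q a b * ln (q a b / (r a * c b)) / ln 2"
      by (intro divide_right_mono) auto
    thus ?thesis using True by (simp add: log_def)
  next
    case False
    hence "q a b = 0" using nn ab by force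
    moreover have "0 \<le> r a * c b" using r0 c0 ab by simp
    ultimately show ?thesis using False by (simp add: divide_nonpos_pos)
  qed
  have "mutual_info A B q = (\<Sum>a\<in>A. \<Sum>b\<in>B. if q a b > 0 then q a b * log 2 (q a b / (r a * c b)) else 0)"
    unfolding mutual_info_def r_def c_def by simp
  also have "\<dots> \<ge> (\<Sum>a\<in>A. \<Sum>b\<in>B. (q a b - r a * c b) / ln 2)"
    using tm1 by (intro sum_mono) auto
  finally have ge: "mutual_info A B q \<ge> (\<Sum>a\<in>A. \<Sum>b\<in>B. (q a b - r a * c b) / ln 2)" .
  have sr: "(\<Sum>a\<in>A. r a) = 1" unfolding r_def using tot .
  have "(\<Sum>b\<in>B. \<Sum>a\<in>A. q a b) = (\<Sum>a\<in>A. \<Sum>b\<in>B. q a b)" by (rule sum.swap)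
  hence sc: "(\<Sum>b\<in>B. c b) = 1" unfolding c_def using tot by simp
  have "(\<Sum>a\<in>A. \<Sum>b\<in>B. (q a b - r a * c b) / ln 2)
      = ((\<Sum>a\<in>A. \<Sum>b\<in>B. q a b) - (\<Sum>a\<in>A. \<Sum>b\<in>B. r a * c b)) / ln 2"
    by (simp add: sum_subtractf sum_divide_distrib[symmetric] diff_divide_distrib)
  also have "(\<Sum>a\<in>A. \<Sum>b\<in>B. r a * c b) = (\<Sum>a\<in>A. r a) * (\<Sum>b\<in>B. c b)"
    by (simp add: sum_product)
  finally have "(\<Sum>a\<in>A. \<Sum>b\<in>B. (q a b - r a * c b) / ln 2) = 0" using sr sc tot by simp
  thus ?thesis using ge by simp
qed



definition tm :: "real \<Rightarrow> real \<Rightarrow> real \<Rightarrow> real" where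
  "tm w q P = (if q > 0 then q * log 2 (q / (w * P)) else 0)"

lemma pw:
  assumes w: "0 < w" and A: "0 \<le> A" and B: "0 \<le> B" and q: "q = w * A * B" and P: "q > 0 \<longrightarrow> P > 0"
  shows "tm w q P = (w * (B * (A * ln A) + A * (B * ln B)) - q * ln P) / ln 2"
proof (cases "q > 0")
  case True
  hence "0 < w * (A * B)" using q by (simp add: mult.assoc)
  hence AB: "0 < A * B" using w by (simp add: zero_less_mult_iff)
  hence Ap: "0 < A" and Bp: "0 < B" using A B by (auto simp: zero_less_mult_iff)
  have Pp: "0 < P" using P True by simp
  have "q / (w * P) = A * B / P" using q w by simp
  hence "ln (q / (w * P)) = ln A + ln B - ln P" using Ap Bp Pp by (simp add: ln_div ln_mult)
  hence "tm w q P = q * (ln A + ln B - ln P) / ln 2" using True unfolding tm_def by (simp add: log_def)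
  also have "\<dots> = (w * (B * (A * ln A) + A * (B * ln B)) - q * ln P) / ln 2"
    unfolding q by (simp add: algebra_simps)
  finally show ?thesis .
next
  case False
  have "0 \<le> q" using q w A B by simp
  hence q0: "q = 0" using False by linarith
  hence "w * A * B = 0" using q by simp
  hence "A = 0 \<or> B = 0" using w by simp
  thus ?thesis using False q0 unfolding tm_def by auto
qed

lemma per_u:
  fixes q1 q2 q3 q4 P1 P2 P3 P4 w :: real
  assumes nn: "0 \<le> q1" "0 \<le> q2" "0 \<le> q3" "0 \<le> q4"
    and wd: "w = q1 + q2 + q3 + q4" and wp: "0 < w"
    and m1: "q1 * w = (q1 + q2) * (q1 + q3)"
    and m2: "q2 * w = (q1 + q2) * (q2 + q4)"
    and m3: "q3 * w = (q3 + q4) * (q1 + q3)"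
    and m4: "q4 * w = (q3 + q4) * (q2 + q4)"
    and P: "q1 > 0 \<longrightarrow> P1 > 0" "q2 > 0 \<longrightarrow> P2 > 0" "q3 > 0 \<longrightarrow> P3 > 0" "q4 > 0 \<longrightarrow> P4 > 0"
  shows "tm w q1 P1 + tm w q2 P2 + tm w q3 P3 + tm w q4 P4 =
    (- w * (hn ((q1 + q2) / w) + hn ((q1 + q3) / w)) - (q1 * ln P1 + q2 * ln P2 + q3 * ln P3 + q4 * ln P4)) / ln 2"
proof -
  define al where "al = (q1 + q2) / w"
  define be where "be = (q1 + q3) / w"
  have al1: "1 - al = (q3 + q4) / w" unfolding al_def using wd wp by (simp add: field_simps)
  have be1: "1 - be = (q2 + q4) / w" unfolding be_def using wd wp by (simp add: field_simps)
  have e1: "q1 = w * al * be"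
  proof -
    have "w * al * be = (q1 + q2) * (q1 + q3) / w" unfolding al_def be_def using wp by (simp add: field_simps)
    moreover have "q1 = (q1 + q2) * (q1 + q3) / w" using m1 wp by (simp add: eq_divide_eq)
    ultimately show ?thesis by simp
  qed
  have e2: "q2 = w * al * (1 - be)"
  proof -
    have "w * al * (1 - be) = (q1 + q2) * (q2 + q4) / w" unfolding al_def be1 using wp by (simp add: field_simps)
    moreover have "q2 = (q1 + q2) * (q2 + q4) / w" using m2 wp by (simp add: eq_divide_eq)
    ultimately show ?thesis by simp
  qed
  have e3: "q3 = w * (1 - al) * be"
  proof -
    have "w * (1 - al) * be = (q3 + q4) * (q1 + q3) / w" unfolding al1 be_def using wp by (simp add: field_simps)
    moreover have "q3 = (q3 + q4) * (q1 + q3) / w" using m3 wp by (simp add: eq_divide_eq)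
    ultimately show ?thesis by simp
  qed
  have e4: "q4 = w * (1 - al) * (1 - be)"
  proof -
    have "w * (1 - al) * (1 - be) = (q3 + q4) * (q2 + q4) / w" unfolding al1 be1 using wp by (simp add: field_simps)
    moreover have "q4 = (q3 + q4) * (q2 + q4) / w" using m4 wp by (simp add: eq_divide_eq)
    ultimately show ?thesis by simp
  qed
  have a00: "0 \<le> al" unfolding al_def using nn wp by auto
  have a01: "0 \<le> 1 - al" unfolding al1 using nn wp by auto
  have b00: "0 \<le> be" unfolding be_def using nn wp by auto
  have b01: "0 \<le> 1 - be" unfolding be1 using nn wp by auto
  note a0 = a00 a01 and b0 = b00 b01
  have a1: "al \<le> 1" "be \<le> 1" using a0 b0 by auto
  have t1: "tm w q1 P1 = (w * (be * (al * ln al) + al * (be * ln be)) - q1 * ln P1) / ln 2"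
    by (rule pw[OF wp a0(1) b0(1) e1 P(1)])
  have t2: "tm w q2 P2 = (w * ((1 - be) * (al * ln al) + al * ((1 - be) * ln (1 - be))) - q2 * ln P2) / ln 2"
    by (rule pw[OF wp a0(1) b0(2) e2 P(2)])
  have t3: "tm w q3 P3 = (w * (be * ((1 - al) * ln (1 - al)) + (1 - al) * (be * ln be)) - q3 * ln P3) / ln 2"
    by (rule pw[OF wp a0(2) b0(1) e3 P(3)])
  have t4: "tm w q4 P4 = (w * ((1 - be) * ((1 - al) * ln (1 - al)) + (1 - al) * ((1 - be) * ln (1 - be))) - q4 * ln P4) / ln 2"
    by (rule pw[OF wp a0(2) b0(2) e4 P(4)])
  have num: "(w * (be * (al * ln al) + al * (be * ln be)) - q1 * ln P1)
     + (w * ((1 - be) * (al * ln al) + al * ((1 - be) * ln (1 - be))) - q2 * ln P2)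
     + (w * (be * ((1 - al) * ln (1 - al)) + (1 - al) * (be * ln be)) - q3 * ln P3)
     + (w * ((1 - be) * ((1 - al) * ln (1 - al)) + (1 - al) * ((1 - be) * ln (1 - be))) - q4 * ln P4)
     = - w * (hn al + hn be) - (q1 * ln P1 + q2 * ln P2 + q3 * ln P3 + q4 * ln P4)"
    unfolding hn_def by (simp add: algebra_simps)
  show ?thesis unfolding t1 t2 t3 t4 al_def[symmetric] be_def[symmetric]
    using num by (simp add: add_divide_distrib[symmetric] diff_divide_distrib[symmetric])
qed



type_synonym law = "nat \<Rightarrow> bool \<Rightarrow> bool \<Rightarrow> real"

definition W :: "law \<Rightarrow> nat \<Rightarrow> real" where
  "W p u = p u True True + p u True False + p u False True + p u False False"
definition Al :: "law \<Rightarrow> nat \<Rightarrow> real" where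
  "Al p u = (p u True True + p u True False) / W p u"
definition Be :: "law \<Rightarrow> nat \<Rightarrow> real" where
  "Be p u = (p u True True + p u False True) / W p u"

lemma W_pos:
  fixes p :: law
  assumes law: "is_law3 p" and u: "u \<in> usupp p"
  shows "0 < W p u"
proof -
  have nn: "\<And>x y. 0 \<le> p u x y" using law unfolding is_law3_def by auto
  obtain x y where xy: "p u x y \<noteq> 0" using u unfolding usupp_def by auto
  have "0 < p u x y" using nn[of x y] xy by simp
  thus ?thesis unfolding W_def using nn by (cases x; cases y) (auto simp: add_pos_nonneg add_nonneg_pos)
qed

lemma markov_u:
  fixes p :: law
  assumes mk: "markov_XUY p"
  shows "p u x y * W p u = (p u x True + p u x False) * (p u True y + p u False y)"
proof -
  have raw: "p u x y * (\<Sum>x'\<in>UNIV. \<Sum>y'\<in>UNIV. p u x' y') = (\<Sum>y'\<in>UNIV. p u x y') * (\<Sum>x'\<in>UNIV. p u x' y)"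
    using mk unfolding markov_XUY_def by blast
  have "(\<Sum>x'\<in>UNIV. \<Sum>y'\<in>UNIV. p u x' y') = W p u" unfolding W_def sum_bool by (simp add: add.assoc)
  moreover have "(\<Sum>y'\<in>UNIV. p u x y') = p u x True + p u x False" by (rule sum_bool)
  moreover have "(\<Sum>x'\<in>UNIV. p u x' y) = p u True y + p u False y" by (rule sum_bool)
  ultimately show ?thesis using raw by simp
qed

lemma marg_ge:
  fixes p :: law
  assumes law: "is_law3 p" and u: "u \<in> usupp p"
  shows "p u x y \<le> marg_XY p x y"
  unfolding marg_XY_def using law u unfolding is_law3_def by (intro member_le_sum) auto

lemma marg_pos:
  fixes p :: law
  assumes law: "is_law3 p" and u: "u \<in> usupp p" and "0 < p u x y"
  shows "0 < marg_XY p x y"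
  using marg_ge[OF law u, of x y] assms(3) by linarith

lemma MI_XYU_eq:
  fixes p :: law
  assumes law: "is_law3 p" and mk: "markov_XUY p"
  shows "MI_XYU p = (- (\<Sum>u\<in>usupp p. W p u * (hn (Al p u) + hn (Be p u)))
     - (marg_XY p True True * ln (marg_XY p True True) + marg_XY p True False * ln (marg_XY p True False)
      + marg_XY p False True * ln (marg_XY p False True) + marg_XY p False False * ln (marg_XY p False False))) / ln 2"
proof -
  define S where "S = usupp p"
  have fin: "finite S" using law unfolding is_law3_def S_def by auto
  have nn: "\<And>u x y. 0 \<le> p u x y" using law unfolding is_law3_def by auto
  have step1: "MI_XYU p = (\<Sum>u\<in>S. tm (W p u) (p u True True) (marg_XY p True True)
     + tm (W p u) (p u True False) (marg_XY p True False)
     + tm (W p u) (p u False True) (marg_XY p False True)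
     + tm (W p u) (p u False False) (marg_XY p False False))"
  proof -
    have fe: "(\<lambda>u (x, y). p u x y) = (\<lambda>u b. p u (fst b) (snd b))" by (auto simp: fun_eq_iff)
    show ?thesis unfolding MI_XYU_def fe mutual_info_def sum_pairs tm_def W_def marg_XY_def S_def fst_conv snd_conv by simp
  qed
  have step2: "tm (W p u) (p u True True) (marg_XY p True True)
     + tm (W p u) (p u True False) (marg_XY p True False)
     + tm (W p u) (p u False True) (marg_XY p False True)
     + tm (W p u) (p u False False) (marg_XY p False False)
     = (- W p u * (hn (Al p u) + hn (Be p u)) - (p u True True * ln (marg_XY p True True)
       + p u True False * ln (marg_XY p True False) + p u False True * ln (marg_XY p False True)
       + p u False False * ln (marg_XY p False False))) / ln 2" if u: "u \<in> S" for u
    unfolding Al_def Be_def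
  proof (rule per_u)
    show "0 < W p u" using W_pos[OF law] u unfolding S_def by simp
    show "W p u = p u True True + p u True False + p u False True + p u False False" by (rule W_def)
    show "p u True True * W p u = (p u True True + p u True False) * (p u True True + p u False True)"
      using markov_u[OF mk, of u True True] .
    show "p u True False * W p u = (p u True True + p u True False) * (p u True False + p u False False)"
      using markov_u[OF mk, of u True False] .
    show "p u False True * W p u = (p u False True + p u False False) * (p u True True + p u False True)"
      using markov_u[OF mk, of u False True] .
    show "p u False False * W p u = (p u False True + p u False False) * (p u True False + p u False False)"
      using markov_u[OF mk, of u False False] .
  qed (use nn u S_def in \<open>auto intro: marg_pos[OF law]\<close>)
  have "MI_XYU p = (\<Sum>u\<in>S. (- W p u * (hn (Al p u) + hn (Be p u)) - (p u True True * ln (marg_XY p True True)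
       + p u True False * ln (marg_XY p True False) + p u False True * ln (marg_XY p False True)
       + p u False False * ln (marg_XY p False False))) / ln 2)"
    unfolding step1 using step2 by (rule sum.cong[OF refl])
  also have "\<dots> = (- (\<Sum>u\<in>S. W p u * (hn (Al p u) + hn (Be p u)))
     - ((\<Sum>u\<in>S. p u True True) * ln (marg_XY p True True) + (\<Sum>u\<in>S. p u True False) * ln (marg_XY p True False)
      + (\<Sum>u\<in>S. p u False True) * ln (marg_XY p False True) + (\<Sum>u\<in>S. p u False False) * ln (marg_XY p False False))) / ln 2"
    by (simp add: sum_divide_distrib[symmetric] sum_subtractf sum.distrib sum_distrib_right sum_negf)
  also have "\<dots> = (- (\<Sum>u\<in>usupp p. W p u * (hn (Al p u) + hn (Be p u)))
     - (marg_XY p True True * ln (marg_XY p True True) + marg_XY p True False * ln (marg_XY p True False)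
      + marg_XY p False True * ln (marg_XY p False True) + marg_XY p False False * ln (marg_XY p False False))) / ln 2"
    unfolding S_def marg_XY_def ..
  finally show ?thesis .
qed



abbreviation rho :: "bool \<Rightarrow> bool \<Rightarrow> real" where "rho \<equiv> (\<lambda>x y. if x \<noteq> y then 1 else 0)"

lemma half_xlnx: assumes "0 \<le> (x::real)" shows "x / 2 * ln (x / 2) = (x * ln x - x * ln 2) / 2"
proof (cases "x = 0")
  case False
  hence "0 < x" using assms by simp
  thus ?thesis by (simp add: ln_div algebra_simps)
qed simp

lemma W_t:
  fixes p :: law
  assumes law: "is_law3 p" and mk: "markov_XUY p" and u: "u \<in> usupp p"
  shows "W p u * (Al p u * (1 - Be p u) + Be p u * (1 - Al p u)) = p u True False + p u False True"
proof -
  have wp: "0 < W p u" by (rule W_pos[OF law u])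
  have m2: "p u True False * W p u = (p u True True + p u True False) * (p u True False + p u False False)"
    using markov_u[OF mk, of u True False] .
  have m3: "p u False True * W p u = (p u False True + p u False False) * (p u True True + p u False True)"
    using markov_u[OF mk, of u False True] .
  have b1: "1 - Be p u = (p u True False + p u False False) / W p u"
    unfolding Be_def using wp by (simp add: field_simps W_def)
  have a1: "1 - Al p u = (p u False True + p u False False) / W p u"
    unfolding Al_def using wp by (simp add: field_simps W_def)
  have "W p u * (Al p u * (1 - Be p u) + Be p u * (1 - Al p u))
     = ((p u True True + p u True False) * (p u True False + p u False False)
       + (p u True True + p u False True) * (p u False True + p u False False)) / W p u"
    unfolding b1 a1 unfolding Al_def Be_def using wp by (simp add: field_simps)
  also have "\<dots> = (p u True False * W p u + p u False True * W p u) / W p u"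
    using m2 m3 by (simp add: algebra_simps)
  also have "\<dots> = p u True False + p u False True" using wp by (simp add: field_simps)
  finally show ?thesis .
qed

lemma AlBe_range:
  fixes p :: law
  assumes law: "is_law3 p" and u: "u \<in> usupp p"
  shows "0 \<le> Al p u" "Al p u \<le> 1" "0 \<le> Be p u" "Be p u \<le> 1"
proof -
  have wp: "0 < W p u" by (rule W_pos[OF law u])
  have nn: "\<And>x y. 0 \<le> p u x y" using law unfolding is_law3_def by auto
  show "0 \<le> Al p u" "0 \<le> Be p u" unfolding Al_def Be_def using wp nn by auto
  show "Al p u \<le> 1" "Be p u \<le> 1" unfolding Al_def Be_def using wp nn
    by (auto simp: divide_le_eq_1 W_def add_nonneg_nonneg)
qed

lemma wyner_lb:
  fixes P :: "bool \<Rightarrow> bool \<Rightarrow> real" and p :: law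
  assumes a: "0 < a" "a < 1/2"
    and cp: "coupling (\<lambda>x::bool. 1/2) (\<lambda>y::bool. 1/2) P"
    and ed: "exp_dist rho P \<le> 2 * a * (1 - a)"
    and law: "is_law3 p" and mg: "marg_XY p = P" and mk: "markov_XUY p"
  shows "MI_XYU p \<ge> (ln 2 + min (lam a * (2 * a * (1 - a))) (hn (2 * a * (1 - a))) - 2 * hn a) / ln 2"
proof -
  define S where "S = usupp p"
  define D where "D = 2 * a * (1 - a)"
  define d where "d = P True False + P False True"
  have fin: "finite S" using law unfolding is_law3_def S_def by auto
  have Pnn: "\<And>x y. 0 \<le> P x y" using cp unfolding coupling_def by auto
  have r1: "P True True + P True False = 1/2" using cp unfolding coupling_def sum_bool by auto
  have r2: "P False True + P False False = 1/2" using cp unfolding coupling_def sum_bool by auto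
  have c1: "P True True + P False True = 1/2" using cp unfolding coupling_def sum_bool by auto
  have c2: "P True False + P False False = 1/2" using cp unfolding coupling_def sum_bool by auto
  have PTF: "P True False = d / 2" using r1 r2 c1 c2 unfolding d_def by (simp add: field_simps; linarith)
  have PFT: "P False True = d / 2" using r1 r2 c1 c2 unfolding d_def by (simp add: field_simps; linarith)
  have PTT: "P True True = (1 - d) / 2" using r1 r2 c1 c2 unfolding d_def by (simp add: field_simps; linarith)
  have PFF: "P False False = (1 - d) / 2" using r1 r2 c1 c2 unfolding d_def by (simp add: field_simps; linarith)
  have d0: "0 \<le> d" using Pnn[of True False] Pnn[of False True] unfolding d_def by linarith
  have d1: "d \<le> 1" using Pnn[of True True] PTT by (simp add: field_simps)
  have edd: "exp_dist rho P = d" unfolding exp_dist_def d_def sum_bool by simp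
  hence dD: "d \<le> D" using ed unfolding D_def by simp
  have ent: "- (P True True * ln (P True True) + P True False * ln (P True False)
      + P False True * ln (P False True) + P False False * ln (P False False)) = ln 2 + hn d"
  proof -
    have "P True True * ln (P True True) = ((1 - d) * ln (1 - d) - (1 - d) * ln 2) / 2"
      unfolding PTT by (rule half_xlnx) (use d1 in simp)
    moreover have "P False False * ln (P False False) = ((1 - d) * ln (1 - d) - (1 - d) * ln 2) / 2"
      unfolding PFF by (rule half_xlnx) (use d1 in simp)
    moreover have "P True False * ln (P True False) = (d * ln d - d * ln 2) / 2"
      unfolding PTF by (rule half_xlnx) (use d0 in simp)
    moreover have "P False True * ln (P False True) = (d * ln d - d * ln 2) / 2"
      unfolding PFT by (rule half_xlnx) (use d0 in simp)
    ultimately show ?thesis unfolding hn_def by (simp add: field_simps)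
  qed
  have MI: "MI_XYU p = (ln 2 + hn d - (\<Sum>u\<in>S. W p u * (hn (Al p u) + hn (Be p u)))) / ln 2"
    using MI_XYU_eq[OF law mk] ent unfolding mg S_def by (simp add: algebra_simps)
  have sumW: "(\<Sum>u\<in>S. W p u) = 1"
    using law unfolding is_law3_def S_def W_def sum_bool by (simp add: add.assoc)
  have sumWt: "(\<Sum>u\<in>S. W p u * (Al p u * (1 - Be p u) + Be p u * (1 - Al p u))) = d"
  proof -
    have "(\<Sum>u\<in>S. W p u * (Al p u * (1 - Be p u) + Be p u * (1 - Al p u)))
        = (\<Sum>u\<in>S. p u True False + p u False True)"
      using W_t[OF law mk] unfolding S_def by (intro sum.cong) auto
    also have "\<dots> = marg_XY p True False + marg_XY p False True"
      unfolding marg_XY_def S_def by (simp add: sum.distrib)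
    finally show ?thesis unfolding mg d_def .
  qed
  have bound: "(\<Sum>u\<in>S. W p u * (hn (Al p u) + hn (Be p u)))
      \<le> (\<Sum>u\<in>S. W p u * (2 * hn a + lam a * ((Al p u * (1 - Be p u) + Be p u * (1 - Al p u)) - D)))"
  proof (rule sum_mono)
    fix u assume u: "u \<in> S"
    have wp: "0 \<le> W p u" using W_pos[OF law] u unfolding S_def by (simp add: less_imp_le)
    have "hn (Al p u) + hn (Be p u) \<le> 2 * hn a + lam a * ((Al p u * (1 - Be p u) + Be p u * (1 - Al p u)) - D)"
      unfolding D_def using core[OF a] AlBe_range[OF law, of u] u unfolding S_def by simp
    thus "W p u * (hn (Al p u) + hn (Be p u)) \<le> W p u * (2 * hn a + lam a * ((Al p u * (1 - Be p u) + Be p u * (1 - Al p u)) - D))"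
      using wp by (rule mult_left_mono)
  qed
  have "(\<Sum>u\<in>S. W p u * (2 * hn a + lam a * ((Al p u * (1 - Be p u) + Be p u * (1 - Al p u)) - D)))
      = 2 * hn a * (\<Sum>u\<in>S. W p u) + lam a * (\<Sum>u\<in>S. W p u * (Al p u * (1 - Be p u) + Be p u * (1 - Al p u)))
        - lam a * D * (\<Sum>u\<in>S. W p u)"
    by (simp add: algebra_simps sum.distrib sum_subtractf sum_distrib_left sum_distrib_right)
  also have "\<dots> = 2 * hn a + lam a * (d - D)" unfolding sumW sumWt by (simp add: algebra_simps)
  finally have b2: "(\<Sum>u\<in>S. W p u * (hn (Al p u) + hn (Be p u))) \<le> 2 * hn a + lam a * (d - D)"
    using bound by simp
  have Fb: "hn d + lam a * (D - d) \<ge> min (lam a * D) (hn D)"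
    unfolding D_def using F_bound[OF a d0] dD unfolding D_def by simp
  have "(ln 2 + min (lam a * D) (hn D) - 2 * hn a) / ln 2 \<le> (ln 2 + hn d - (\<Sum>u\<in>S. W p u * (hn (Al p u) + hn (Be p u)))) / ln 2"
    using b2 Fb by (intro divide_right_mono) (auto simp: algebra_simps)
  thus ?thesis unfolding MI D_def .
qed



definition pa :: "real \<Rightarrow> nat \<Rightarrow> bool \<Rightarrow> real" where "pa a u x = (if x = (u = 1) then 1 - a else a)"
definition p0 :: "real \<Rightarrow> law" where "p0 a u x y = (if u \<le> 1 then pa a u x * pa a u y / 2 else 0)"

lemma pa_sum: "pa a u True + pa a u False = 1" unfolding pa_def by auto

lemma pa_F: "pa a u False = 1 - pa a u True" unfolding pa_def by auto

lemma pa_pos: "0 < a \<Longrightarrow> a < 1 \<Longrightarrow> 0 < pa a u x" unfolding pa_def by auto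

lemma pa_col: "u \<in> {0,1} \<Longrightarrow> pa a 0 x + pa a 1 x = 1" unfolding pa_def by auto

lemma usupp_p0: assumes "0 < a" "a < 1" shows "usupp (p0 a) = {0, 1}"
proof
  show "usupp (p0 a) \<subseteq> {0, 1}" unfolding usupp_def p0_def by (auto split: if_splits)
  show "{0, 1} \<subseteq> usupp (p0 a)" unfolding usupp_def p0_def using pa_pos[OF assms]
    by (auto intro!: exI[of _ True] simp: less_imp_neq[symmetric])
qed

lemma p0_rowx: "(\<Sum>y\<in>UNIV. p0 a u x y) = (if u \<le> 1 then pa a u x / 2 else 0)"
proof -
  have "pa a u x * pa a u True / 2 + pa a u x * pa a u False / 2 = pa a u x * (pa a u True + pa a u False) / 2"
    by (simp add: algebra_simps)
  thus ?thesis unfolding p0_def sum_bool pa_sum by simp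
qed

lemma p0_rowy: "(\<Sum>x\<in>UNIV. p0 a u x y) = (if u \<le> 1 then pa a u y / 2 else 0)"
proof -
  have "pa a u True * pa a u y / 2 + pa a u False * pa a u y / 2 = (pa a u True + pa a u False) * pa a u y / 2"
    by (simp add: algebra_simps)
  thus ?thesis unfolding p0_def sum_bool pa_sum by simp
qed

lemma mi_p0_generic:
  assumes a: "0 < a" "a < 1"
  shows "mutual_info {0::nat, 1} (UNIV :: bool set) (\<lambda>u x. if u \<le> 1 then pa a u x / 2 else 0) = (ln 2 - hn a) / ln 2"
proof -
  let ?q = "\<lambda>u x. if u \<le> 1 then pa a u x / 2 else 0"
  have la: "log 2 (2 * a) = 1 + log 2 a" using a log_mult_pos[of 2 a 2] by simp
  have lb: "log 2 (2 * (1 - a)) = 1 + log 2 (1 - a)" using a log_mult_pos[of 2 "1-a" 2] by simp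
  have row: "(\<Sum>b'\<in>UNIV. ?q u b') = 1/2" if "u \<in> {0::nat,1}" for u
    using that pa_sum[of a u] unfolding sum_bool by (auto simp: add_divide_distrib[symmetric])
  have col: "(\<Sum>a'\<in>{0::nat,1}. ?q a' x) = 1/2" for x
    using pa_col[of 0 a x] by (simp add: add_divide_distrib[symmetric])
  have tm: "(if ?q u x > 0 then ?q u x * log 2 (?q u x / ((\<Sum>b'\<in>UNIV. ?q u b') * (\<Sum>a'\<in>{0::nat,1}. ?q a' x))) else 0)
      = pa a u x / 2 * log 2 (2 * pa a u x)" if u: "u \<in> {0::nat,1}" for u x
  proof -
    have "?q u x = pa a u x / 2" using u by auto
    moreover have "pa a u x > 0" by (rule pa_pos[OF a])
    moreover have "pa a u x / 2 / (1/2 * (1/2)) = 2 * pa a u x" by simp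
    moreover have u1: "u \<le> 1" using u by auto
    ultimately show ?thesis unfolding row[OF u] col by simp
  qed
  have "mutual_info {0::nat, 1} (UNIV :: bool set) ?q = (\<Sum>u\<in>{0::nat,1}. \<Sum>x\<in>UNIV. pa a u x / 2 * log 2 (2 * pa a u x))"
    unfolding mutual_info_def using tm by (intro sum.cong refl) auto
  also have "\<dots> = a * (1 + log 2 a) + (1 - a) * (1 + log 2 (1 - a))"
    unfolding sum_bool using lb by (simp add: pa_def la lb)
  also have "\<dots> = (ln 2 - hn a) / ln 2"
    unfolding hn_def log_def by (simp add: field_simps)
  finally show ?thesis .
qed

lemma MI_XU_p0: assumes a: "0 < a" "a < 1" shows "MI_XU (p0 a) = (ln 2 - hn a) / ln 2"
  unfolding MI_XU_def usupp_p0[OF a] p0_rowx using mi_p0_generic[OF a] .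

lemma MI_YU_p0: assumes a: "0 < a" "a < 1" shows "MI_YU (p0 a) = (ln 2 - hn a) / ln 2"
  unfolding MI_YU_def usupp_p0[OF a] p0_rowy using mi_p0_generic[OF a] .

lemma p0_law: assumes a: "0 < a" "a < 1" shows "is_law3 (p0 a)"
  unfolding is_law3_def usupp_p0[OF a] p0_rowx
proof (intro conjI allI)
  fix u x y show "0 \<le> p0 a u x y" unfolding p0_def using pa_pos[OF a] by (auto intro!: mult_nonneg_nonneg less_imp_le)
qed (auto simp: sum_bool pa_def)

lemma p0_marg: assumes a: "0 < a" "a < 1"
  shows "marg_XY (p0 a) x y = (pa a 0 x * pa a 0 y + pa a 1 x * pa a 1 y) / 2"
  unfolding marg_XY_def usupp_p0[OF a] p0_def by (simp add: add_divide_distrib)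

lemma p0_coupling: assumes a: "0 < a" "a < 1"
  shows "coupling (\<lambda>x::bool. 1/2) (\<lambda>y::bool. 1/2) (marg_XY (p0 a))"
  unfolding coupling_def p0_marg[OF a] sum_bool using a
  by (auto simp: pa_def field_simps intro!: add_nonneg_nonneg mult_nonneg_nonneg)

lemma p0_dist: assumes a: "0 < a" "a < 1"
  shows "exp_dist rho (marg_XY (p0 a)) = 2 * a * (1 - a)"
  unfolding exp_dist_def p0_marg[OF a] sum_bool by (simp add: pa_def field_simps)

lemma p0_markov: "markov_XUY (p0 a)"
  unfolding markov_XUY_def
proof (intro allI)
  fix u x y
  show "p0 a u x y * (\<Sum>x'\<in>UNIV. \<Sum>y'\<in>UNIV. p0 a u x' y') = (\<Sum>y'\<in>UNIV. p0 a u x y') * (\<Sum>x'\<in>UNIV. p0 a u x' y)"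
  proof (cases "u \<le> 1")
    case True
    hence "u = 0 \<or> u = 1" by auto
    thus ?thesis unfolding sum_bool p0_def pa_def
      by (cases x; cases y) (auto simp: field_simps)
  qed (simp add: p0_def)
qed

lemma p0_card: assumes a: "0 < a" "a < 1"
  shows "card (usupp (p0 a)) \<le> card (UNIV :: bool set) + card (UNIV :: bool set) + 1"
  unfolding usupp_p0[OF a] by simp



definition pX :: "(bool \<Rightarrow> bool \<Rightarrow> real) \<Rightarrow> law" where
  "pX P u x y = (if u = (if x then 1 else 0) then P x y else 0)"

lemma pX_facts:
  assumes cp: "coupling (\<lambda>x::bool. 1/2) (\<lambda>y::bool. 1/2) P"
  shows "is_law3 (pX P)" "marg_XY (pX P) = P" "markov_XUY (pX P)"
proof -
  have Pnn: "\<And>x y. 0 \<le> P x y" using cp unfolding coupling_def by auto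
  have r1: "P True True + P True False = 1/2" using cp unfolding coupling_def sum_bool by auto
  have r2: "P False True + P False False = 1/2" using cp unfolding coupling_def sum_bool by auto
  have us: "usupp (pX P) = {0, 1}"
  proof
    show "usupp (pX P) \<subseteq> {0, 1}" unfolding usupp_def pX_def by (auto split: if_splits)
    have "P False True \<noteq> 0 \<or> P False False \<noteq> 0" using r2 by auto
    hence "0 \<in> usupp (pX P)" unfolding usupp_def pX_def by auto
    moreover have "P True True \<noteq> 0 \<or> P True False \<noteq> 0" using r1 by auto
    hence "1 \<in> usupp (pX P)" unfolding usupp_def pX_def by auto
    ultimately show "{0, 1} \<subseteq> usupp (pX P)" by auto
  qed
  show "is_law3 (pX P)"
    unfolding is_law3_def us using Pnn r1 r2 by (auto simp: pX_def sum_bool)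
  show "marg_XY (pX P) = P"
    unfolding marg_XY_def us by (auto simp: fun_eq_iff pX_def)
  show "markov_XUY (pX P)"
    unfolding markov_XUY_def sum_bool by (auto simp: pX_def algebra_simps)
qed

lemma diag_coupling:
  "coupling (\<lambda>x::bool. 1/2) (\<lambda>y::bool. 1/2) (\<lambda>x y. if x = y then 1/2 else 0)"
  "exp_dist rho (\<lambda>x y. if x = y then 1/2 else (0::real)) = 0"
  unfolding coupling_def exp_dist_def sum_bool by auto

theorem mainTheorem7:
  fixes D :: real
  assumes "0 < D" and "D < 1/2"
  shows "I0 (\<lambda>x::bool. 1/2) (\<lambda>y::bool. 1/2) (\<lambda>x y. if x \<noteq> y then 1 else 0) D
         < C0 (\<lambda>x::bool. 1/2) (\<lambda>y::bool. 1/2) (\<lambda>x y. if x \<noteq> y then 1 else 0) D"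
proof -
  define r where "r = sqrt (1 - 2 * D)"
  define a where "a = (1 - r) / 2"
  have r0: "0 < r" unfolding r_def using assms by simp
  have r1: "r < 1" unfolding r_def using assms by simp
  have r2: "r^2 = 1 - 2 * D" unfolding r_def using assms by simp
  have a0: "0 < a" "a < 1/2" unfolding a_def using r0 r1 by auto
  have a1: "a < 1" using a0 by simp
  have aD: "2 * a * (1 - a) = D"
  proof -
    have "2 * a * (1 - a) = (1 - r^2) / 2" unfolding a_def by (simp add: field_simps power2_eq_square)
    thus ?thesis using r2 by simp
  qed
  define V where "V = (ln 2 - hn a) / ln 2"
  define m where "m = min (lam a * (2 * a * (1 - a))) (hn (2 * a * (1 - a)))"
  define Lb where "Lb = (ln 2 + m - 2 * hn a) / ln 2"
  have mgt: "m > hn a" unfolding m_def using lamD_gt[OF a0] hnD_gt[OF a0] by simp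
  have VL: "V < Lb" unfolding V_def Lb_def using mgt by (intro divide_strict_right_mono) auto
  let ?S = "{max (MI_XU p) (MI_YU p) | p. is_law3 p \<and> coupling (\<lambda>x::bool. 1/2) (\<lambda>y::bool. 1/2) (marg_XY p) \<and>
     exp_dist (\<lambda>x y. if x \<noteq> y then 1 else 0) (marg_XY p) \<le> D \<and>
     markov_XUY p \<and> card (usupp p) \<le> card (UNIV :: bool set) + card (UNIV :: bool set) + 1}"
  have inS: "V \<in> ?S"
  proof -
    have "max (MI_XU (p0 a)) (MI_YU (p0 a)) = V" unfolding V_def MI_XU_p0[OF a0(1) a1] MI_YU_p0[OF a0(1) a1] by simp
    moreover have "exp_dist (\<lambda>x y. if x \<noteq> y then 1 else 0) (marg_XY (p0 a)) \<le> D"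
      using p0_dist[OF a0(1) a1] aD by simp
    ultimately show ?thesis
      using p0_law[OF a0(1) a1] p0_coupling[OF a0(1) a1] p0_markov[of a] p0_card[OF a0(1) a1]
      by (intro CollectI exI[of _ "p0 a"]) auto
  qed
  have bdd: "bdd_below ?S"
  proof (rule bdd_belowI[of _ 0])
    fix z assume "z \<in> ?S"
    then obtain p :: law where p: "z = max (MI_XU p) (MI_YU p)" "is_law3 p" by auto
    have "0 \<le> MI_XU p" unfolding MI_XU_def
      using p(2) unfolding is_law3_def by (intro mi_nonneg) (auto intro: sum_nonneg)
    thus "0 \<le> z" using p(1) by simp
  qed
  have I0le: "I0 (\<lambda>x::bool. 1/2) (\<lambda>y::bool. 1/2) (\<lambda>x y. if x \<noteq> y then 1 else 0) D \<le> V"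
    unfolding I0_def by (rule cInf_lower[OF inS bdd])
  have wy: "Lb \<le> wyner_CI P" if cp: "coupling (\<lambda>x::bool. 1/2) (\<lambda>y::bool. 1/2) P"
    and ed: "exp_dist (\<lambda>x y. if x \<noteq> y then 1 else 0) P \<le> D" for P :: "bool \<Rightarrow> bool \<Rightarrow> real"
    unfolding wyner_CI_def
  proof (rule cInf_greatest)
    show "{MI_XYU p |p. is_law3 p \<and> marg_XY p = P \<and> markov_XUY p} \<noteq> {}"
      using pX_facts[OF cp] by blast
    fix z assume "z \<in> {MI_XYU p |p. is_law3 p \<and> marg_XY p = P \<and> markov_XUY p}"
    then obtain p where p: "z = MI_XYU p" "is_law3 p" "marg_XY p = P" "markov_XUY p" by blast
    have "exp_dist rho P \<le> 2 * a * (1 - a)" using ed aD by simp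
    from wyner_lb[OF a0 cp this p(2) p(3) p(4)] show "Lb \<le> z" unfolding Lb_def m_def p(1) .
  qed
  have C0ge: "Lb \<le> C0 (\<lambda>x::bool. 1/2) (\<lambda>y::bool. 1/2) (\<lambda>x y. if x \<noteq> y then 1 else 0) D"
    unfolding C0_def
  proof (rule cInf_greatest)
    show "{wyner_CI P |P. coupling (\<lambda>x::bool. 1/2) (\<lambda>y::bool. 1/2) P \<and> exp_dist (\<lambda>x y. if x \<noteq> y then 1 else 0) P \<le> D} \<noteq> {}"
      using diag_coupling assms by (intro ex_in_conv[THEN iffD1] exI[of _ "wyner_CI (\<lambda>x y. if x = y then 1/2 else 0)"]) auto
    fix z assume "z \<in> {wyner_CI P |P. coupling (\<lambda>x::bool. 1/2) (\<lambda>y::bool. 1/2) P \<and> exp_dist (\<lambda>x y. if x \<noteq> y then 1 else 0) P \<le> D}"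
    then obtain P where "z = wyner_CI P" "coupling (\<lambda>x::bool. 1/2) (\<lambda>y::bool. 1/2) P"
      "exp_dist (\<lambda>x y. if x \<noteq> y then 1 else 0) P \<le> D" by blast
    thus "Lb \<le> z" using wy by simp
  qed
  show ?thesis using I0le VL C0ge by linarith
qed

end
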